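(* Let $q$ be a prime power, $\mathbb{L}=\mathrm{GF}(q^m)$, $n\mid q^m-1$, and $F_n=\{f\in\mathbb{L}^n : f_{qi\bmod n}=f_i^q\ \forall i\in\mathbb{Z}/n\mathbb{Z}\}$. Let $B_m(n)$ be the number of $q$-cyclotomic classes modulo $n$ having length $m$. Then the covering radius of $F_n\subseteq\mathbb{L}^n$ in the symbol Hamming metric is $$\rho(F_n)=n-B_m(n).$$ For $n=q^m-1$, $B_m(n)=\frac1m\sum_{r\mid m}\mu(m/r)(q^r-1)$.
   Context: The symbol Hamming distance between $x,y\in\mathbb{L}^n$ is $|\{i : x_i\ne y_i\}|$; the covering radius of a code $\mathcal{C}\subseteq\mathbb{L}^n$ is $\max_{x\in\mathbb{L}^n}\min_{c\in\mathcal{C}}d(x,c)$. The $q$-cyclotomic class of $s\in\mathbb{Z}/n\mathbb{Z}$ is $\{s,qs,q^2s,\ldots\}\bmod n$. $\mu$ is the Möbius function. *)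

theory Defs
  imports "HOL-Computational_Algebra.Computational_Algebra"
begin

text \<open>Words of length n over an alphabet 'a, indexed by {0..<n} (i.e. Z/nZ).\<close>
definition words :: "nat \<Rightarrow> (nat \<Rightarrow> 'a) set" where
  "words n = PiE {..<n} (\<lambda>_. UNIV)"

definition hamming_dist :: "nat \<Rightarrow> (nat \<Rightarrow> 'a) \<Rightarrow> (nat \<Rightarrow> 'a) \<Rightarrow> nat" where
  "hamming_dist n x y = card {i. i < n \<and> x i \<noteq> y i}"

definition covering_radius :: "nat \<Rightarrow> (nat \<Rightarrow> 'a) set \<Rightarrow> nat" where
  "covering_radius n C = Max ((\<lambda>x. Min ((\<lambda>c. hamming_dist n x c) ` C)) ` words n)"

definition F_code :: "nat \<Rightarrow> nat \<Rightarrow> (nat \<Rightarrow> 'a::field) set" where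
  "F_code q n = {f \<in> words n. \<forall>i<n. f ((q * i) mod n) = (f i) ^ q}"

definition cyclotomic_class :: "nat \<Rightarrow> nat \<Rightarrow> nat \<Rightarrow> nat set" where
  "cyclotomic_class q n s = {(q ^ j * s) mod n | j. True}"

definition B_count :: "nat \<Rightarrow> nat \<Rightarrow> nat \<Rightarrow> nat" where
  "B_count q m n = card {C \<in> cyclotomic_class q n ` {..<n}. card C = m}"

definition moebius_mu :: "nat \<Rightarrow> int" where
  "moebius_mu k = (if k = 0 then 0 else if squarefree k then (-1) ^ card (prime_factors k) else 0)"

end

theory Submission
  imports Defs
begin


definition per :: "nat \<Rightarrow> nat \<Rightarrow> nat \<Rightarrow> nat" where
  "per q n i = (LEAST d. 0 < d \<and> q ^ d * i mod n = i)"

lemma mod_shift: "q ^ a * (q ^ b * i mod n) mod n = q ^ (a + b) * i mod (n::nat)"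
  by (simp add: mod_mult_right_eq power_add mult.assoc)

lemma period_mult:
  assumes "q ^ p * i mod n = (i::nat)"
  shows "q ^ (p * t) * i mod n = i"
proof (induction t)
  case 0 then show ?case using assms
    by (metis mod_mod_trivial mult_1 power_0 mult_0_right)
next
  case (Suc t)
  have "q ^ (p * Suc t) * i mod n = q ^ p * (q ^ (p * t) * i mod n) mod n"
    by (simp add: mod_shift)
  also have "\<dots> = i" using Suc assms by simp
  finally show ?case .
qed

lemma period_mod:
  assumes "q ^ p * i mod n = (i::nat)"
  shows "q ^ a * i mod n = q ^ (a mod p) * i mod n"
proof -
  have "q ^ a * i mod n = q ^ (a mod p) * (q ^ (p * (a div p)) * i mod n) mod n"
    by (simp add: mod_shift)
  also have "\<dots> = q ^ (a mod p) * i mod n" using period_mult[OF assms] by simp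
  finally show ?thesis .
qed

context
  fixes q m n :: nat
  assumes qm: "q ^ m mod n = 1 mod n" and npos: "n > 0" and mpos: "m > 0"
begin

lemma qm_fix: "i < n \<Longrightarrow> q ^ m * i mod n = i"
  using qm by (metis mod_mult_left_eq mult_1 mod_less)

lemma per_props:
  assumes "i < n"
  shows "0 < per q n i" "q ^ per q n i * i mod n = i" "per q n i \<le> m"
proof -
  have ex: "0 < m \<and> q ^ m * i mod n = i" using mpos qm_fix[OF assms] by simp
  have "0 < per q n i \<and> q ^ per q n i * i mod n = i"
    unfolding per_def by (rule LeastI[of _ m], rule ex)
  then show "0 < per q n i" "q ^ per q n i * i mod n = i" by auto
  show "per q n i \<le> m" unfolding per_def by (rule Least_le, rule ex)
qed

lemma per_min: "0 < d \<Longrightarrow> d < per q n i \<Longrightarrow> q ^ d * i mod n \<noteq> i"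
  unfolding per_def using not_less_Least by blast

lemma per_mod: "i < n \<Longrightarrow> q ^ a * i mod n = q ^ (a mod per q n i) * i mod n"
  using period_mod per_props(2) by blast

lemma per_inj:
  assumes i: "i < n" and a: "a < per q n i" and b: "b < per q n i"
    and eq: "q ^ a * i mod n = q ^ b * i mod n"
  shows "a = b"
proof (rule ccontr)
  assume ne: "a \<noteq> b"
  let ?p = "per q n i"
  have key: "q ^ (y - x) * i mod n = i" if xy: "x < y" "y < ?p"
     and e: "q ^ x * i mod n = q ^ y * i mod n" for x y
  proof -
    have "i = q ^ (?p - x) * (q ^ x * i mod n) mod n"
      using xy per_props(2)[OF i] by (simp add: mod_shift)
    also have "\<dots> = q ^ (?p - x) * (q ^ y * i mod n) mod n" using e by simp
    also have "\<dots> = q ^ (y - x) * (q ^ ?p * i mod n) mod n"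
    proof -
      have eqe: "?p - x + y = (y - x) + ?p" using xy by arith
      show ?thesis by (simp only: mod_shift eqe)
    qed
    also have "\<dots> = q ^ (y - x) * i mod n" using per_props(2)[OF i] by simp
    finally show ?thesis by simp
  qed
  show False
  proof (cases "a < b")
    case True
    then show False using key[OF True b eq] per_min[of "b - a" i] b by auto
  next
    case False
    then have "b < a" using ne by auto
    then show False using key[OF \<open>b < a\<close> a eq[symmetric]] per_min[of "a - b" i] a by auto
  qed
qed

lemma per_dvd_iff:
  assumes i: "i < n"
  shows "q ^ d * i mod n = i \<longleftrightarrow> per q n i dvd d"
proof
  assume h: "q ^ d * i mod n = i"
  have "q ^ (d mod per q n i) * i mod n = i" using h per_mod[OF i, of d] by simp
  then have "d mod per q n i = 0"
    using per_min[of "d mod per q n i" i] per_props(1)[OF i] by (meson mod_less_divisor neq0_conv)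
  then show "per q n i dvd d" by auto
next
  assume "per q n i dvd d"
  then obtain t where "d = per q n i * t" by auto
  then show "q ^ d * i mod n = i" using period_mult[OF per_props(2)[OF i]] by simp
qed

lemma per_dvd_m: "i < n \<Longrightarrow> per q n i dvd m"
  using per_dvd_iff qm_fix by blast

lemma class_eq:
  assumes i: "i < n"
  shows "cyclotomic_class q n i = (\<lambda>j. q ^ j * i mod n) ` {..<per q n i}"
proof
  show "cyclotomic_class q n i \<subseteq> (\<lambda>j. q ^ j * i mod n) ` {..<per q n i}"
  proof
    fix x assume "x \<in> cyclotomic_class q n i"
    then obtain j where "x = q ^ j * i mod n" unfolding cyclotomic_class_def by auto
    then have "x = q ^ (j mod per q n i) * i mod n" using per_mod[OF i] by simp
    then show "x \<in> (\<lambda>j. q ^ j * i mod n) ` {..<per q n i}"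
      using per_props(1)[OF i] by auto
  qed
qed (auto simp: cyclotomic_class_def)

lemma card_class: "i < n \<Longrightarrow> card (cyclotomic_class q n i) = per q n i"
  apply (subst class_eq, assumption)
  apply (subst card_image)
   apply (auto simp: inj_on_def intro: per_inj)
  done

lemma finite_class: "i < n \<Longrightarrow> finite (cyclotomic_class q n i)"
  using class_eq by simp

lemma self_in_class: "i < n \<Longrightarrow> i \<in> cyclotomic_class q n i"
  unfolding cyclotomic_class_def by (rule CollectI, rule exI[of _ 0]) simp

lemma class_lt: "x \<in> cyclotomic_class q n i \<Longrightarrow> x < n"
  unfolding cyclotomic_class_def using npos by auto

lemma class_mem:
  assumes i: "i < n" and s: "s \<in> cyclotomic_class q n i"
  shows "cyclotomic_class q n s = cyclotomic_class q n i"
proof -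
  obtain a where sa: "s = q ^ a * i mod n" using s unfolding cyclotomic_class_def by auto
  show ?thesis
  proof
    show "cyclotomic_class q n s \<subseteq> cyclotomic_class q n i"
    proof
      fix x assume "x \<in> cyclotomic_class q n s"
      then obtain j where x: "x = q ^ j * s mod n" unfolding cyclotomic_class_def by auto
      have "x = q ^ (j + a) * i mod n" unfolding x sa by (simp only: mod_shift)
      then show "x \<in> cyclotomic_class q n i" unfolding cyclotomic_class_def by blast
    qed
    show "cyclotomic_class q n i \<subseteq> cyclotomic_class q n s"
    proof
      fix x assume "x \<in> cyclotomic_class q n i"
      then obtain j where x: "x = q ^ j * i mod n" unfolding cyclotomic_class_def by auto
      have e: "(j + (m - 1) * a) + a = j + m * a" using mpos by (cases m) auto
      have "q ^ (j + (m - 1) * a) * s mod n = q ^ ((j + (m - 1) * a) + a) * i mod n"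
        unfolding sa by (simp only: mod_shift)
      also have "\<dots> = q ^ j * (q ^ (m * a) * i mod n) mod n"
        unfolding e by (simp only: mod_shift)
      also have "\<dots> = x" using period_mult[OF qm_fix[OF i]] x by simp
      finally show "x \<in> cyclotomic_class q n s" unfolding cyclotomic_class_def by auto
    qed
  qed
qed

lemma per_mem: "i < n \<Longrightarrow> s \<in> cyclotomic_class q n i \<Longrightarrow> per q n s = per q n i"
  using class_mem card_class class_lt by metis

end


lemma pow_card_same:
  fixes x :: "'a :: {field,finite}"
  shows "x ^ card (UNIV :: 'a set) = x"
proof (cases "x = 0")
  case False
  have "x * (\<Prod>y\<in>UNIV-{0}. x * y) = x * x ^ (card (UNIV :: 'a set) - 1) * \<Prod>(UNIV-{0})"
    by (simp add: prod.distrib mult_ac)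
  also have "x * x ^ (card (UNIV :: 'a set) - 1) = x ^ Suc (card (UNIV :: 'a set) - 1)"
    by (subst power_Suc) auto
  also have "Suc (card (UNIV :: 'a set) - 1) = card (UNIV :: 'a set)"
    using finite_UNIV_card_ge_0[where ?'a = 'a] by simp
  also have "(\<Prod>y\<in>UNIV-{0}. x * y) = (\<Prod>y\<in>UNIV-{0}. y)"
    by (rule prod.reindex_bij_witness[of _ "\<lambda>y. y / x" "\<lambda>y. x * y"]) (use False in auto)
  finally show ?thesis
    by simp
qed (use finite_UNIV_card_ge_0[where ?'a = 'a] in auto)

lemma frob_mult:
  fixes x :: "'a :: {field,finite}"
  assumes "card (UNIV :: 'a set) = q ^ m"
  shows "x ^ (q ^ (m * t)) = x"
proof (induction t)
  case (Suc t)
  have "x ^ (q ^ (m * Suc t)) = (x ^ (q ^ (m * t))) ^ (q ^ m)"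
    by (simp add: power_add power_mult[symmetric] mult.commute)
  then show ?case using Suc pow_card_same[of x] assms by simp
qed simp

lemma frob_mod:
  fixes x :: "'a :: {field,finite}"
  assumes "card (UNIV :: 'a set) = q ^ m"
  shows "x ^ (q ^ a) = x ^ (q ^ (a mod m))"
proof -
  have qa: "q ^ a = q ^ (m * (a div m)) * q ^ (a mod m)"
    by (metis power_add mult_div_mod_eq)
  have "x ^ (q ^ a) = (x ^ (q ^ (m * (a div m)))) ^ (q ^ (a mod m))"
    by (subst qa) (simp add: power_mult)
  then show ?thesis using frob_mult[OF assms] by simp
qed

lemma geom_lt: "(q::nat) \<ge> 2 \<Longrightarrow> (\<Sum>e<m. q ^ e) < q ^ m"
proof (induction m)
  case (Suc m)
  then have "(\<Sum>e<Suc m. q ^ e) < q ^ m + q ^ m" by simp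
  also have "\<dots> \<le> q * q ^ m" using Suc.prems by (simp add: mult_2[symmetric])
  finally show ?case by simp
qed simp

lemma exists_gen:
  fixes q m :: nat
  assumes card: "card (UNIV :: 'a::{field,finite} set) = q ^ m" and q2: "q \<ge> 2"
  shows "\<exists>z::'a. \<forall>e. 0 < e \<and> e < m \<longrightarrow> z ^ (q ^ e) \<noteq> z"
proof -
  define P where "P e = (monom (1::'a) (q ^ e) - monom 1 1)" for e
  define Bad where "Bad = (\<Union>e\<in>{1..<m}. {x. poly (P e) x = 0})"
  have cardP: "card {x. poly (P e) x = 0} \<le> q ^ e" if "e \<in> {1..<m}" for e
  proof -
    have "1 < q ^ e" using that q2 by (intro one_less_power) auto
    then have qe: "q ^ e \<noteq> 1" by (metis less_not_refl)
    have "coeff (P e) (q ^ e) = 1" by (simp add: P_def coeff_monom, metis qe One_nat_def)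
    then have nz: "P e \<noteq> 0" by auto
    have "degree (P e) \<le> q ^ e"
      unfolding P_def using q2 that
      by (intro order.trans[OF degree_diff_le_max]) (auto simp: degree_monom_le intro: order.trans[OF degree_monom_le])
    then show ?thesis using card_poly_roots_bound[OF nz] by linarith
  qed
  have "card Bad \<le> (\<Sum>e\<in>{1..<m}. card {x. poly (P e) x = 0})"
    unfolding Bad_def by (rule card_UN_le) simp
  also have "\<dots> \<le> (\<Sum>e\<in>{1..<m}. q ^ e)" by (rule sum_mono) (rule cardP)
  also have "\<dots> \<le> (\<Sum>e<m. q ^ e)" by (rule sum_mono2) auto
  also have "\<dots> < q ^ m" by (rule geom_lt[OF q2])
  finally have "card Bad < card (UNIV :: 'a set)" using card by simp
  then have "Bad \<noteq> UNIV" by auto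
  then obtain z where z: "z \<notin> Bad" by auto
  show ?thesis
  proof (intro exI allI impI)
    fix e assume e: "0 < e \<and> e < m"
    then have "poly (P e) z \<noteq> 0" using z unfolding Bad_def by auto
    then show "z ^ (q ^ e) \<noteq> z" by (simp add: P_def poly_monom)
  qed
qed

lemma F_iter:
  assumes f: "f \<in> F_code q n" and i: "i < n"
  shows "f (q ^ a * i mod n) = f i ^ (q ^ a)"
proof (induction a)
  case 0 then show ?case using i by simp
next
  case (Suc a)
  have n: "n > 0" using i by simp
  have "f (q ^ Suc a * i mod n) = f (q * (q ^ a * i mod n) mod n)"
    by (metis mod_shift power_one_right plus_1_eq_Suc)
  also have "\<dots> = f (q ^ a * i mod n) ^ q"
    using f n unfolding F_code_def by auto
  also have "\<dots> = f i ^ (q ^ Suc a)" using Suc by (simp add: power_mult[symmetric] mult.commute)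
  finally show ?case .
qed



context
  fixes q m n :: nat
  assumes qm: "q ^ m mod n = 1 mod n" and npos: "n > 0" and mpos: "m > 0" and qpos: "q > 0"
begin

definition fullR where "fullR = {C \<in> cyclotomic_class q n ` {..<n}. card C = m}"

lemma finite_fullR: "finite fullR"
  unfolding fullR_def by auto

lemma B_eq: "B_count q m n = card fullR"
  unfolding B_count_def fullR_def ..

lemma lower_bound:
  fixes z :: "'a::{field,finite}"
  assumes card: "card (UNIV :: 'a set) = q ^ m"
    and z: "\<forall>e. 0 < e \<and> e < m \<longrightarrow> z ^ (q ^ e) \<noteq> z"
    and f: "f \<in> (F_code q n :: (nat \<Rightarrow> 'a) set)"
  shows "n - card fullR \<le> hamming_dist n (\<lambda>i. if i < n then z else undefined) f"
proof -
  let ?Cl = "cyclotomic_class q n"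
  define M where "M = {i. i < n \<and> f i = z}"
  have Mfull: "per q n i = m" if "i \<in> M" for i
  proof (rule ccontr)
    assume ne: "per q n i \<noteq> m"
    have i: "i < n" "f i = z" using that M_def by auto
    have "per q n i < m" using per_props(3)[OF qm npos mpos i(1)] ne by simp
    moreover have "0 < per q n i" using per_props(1)[OF qm npos mpos i(1)] .
    moreover have "z ^ (q ^ per q n i) = z"
      using F_iter[OF f i(1), of "per q n i"] per_props(2)[OF qm npos mpos i(1)] i by simp
    ultimately show False using z by blast
  qed
  have inj: "inj_on ?Cl M"
  proof
    fix i i' assume i: "i \<in> M" and i': "i' \<in> M" and eq: "?Cl i = ?Cl i'"
    have il: "i < n" "f i = z" "i' < n" "f i' = z" using i i' M_def by auto
    have "i' \<in> ?Cl i" using eq self_in_class[OF qm npos mpos il(3)] by simp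
    then obtain a where a: "i' = q ^ a * i mod n" unfolding cyclotomic_class_def by auto
    have pm: "per q n i = m" using Mfull i by simp
    have a2: "i' = q ^ (a mod m) * i mod n" using a per_mod[OF qm npos mpos il(1), of a] pm by simp
    have "z ^ (q ^ (a mod m)) = z" using F_iter[OF f il(1), of "a mod m"] a2 il by simp
    then have "a mod m = 0" using z mpos by (meson mod_less_divisor neq0_conv)
    then show "i = i'" using a2 il by simp
  qed
  have img: "?Cl ` M \<subseteq> fullR"
    unfolding fullR_def using Mfull card_class[OF qm npos mpos] M_def by auto
  have cM: "card M \<le> card fullR"
    using card_inj_on_le[OF inj img finite_fullR] .
  have "{i. i < n \<and> (if i < n then z else undefined) \<noteq> f i} = {..<n} - M"
    unfolding M_def by auto
  then have "hamming_dist n (\<lambda>i. if i < n then z else undefined) f = n - card M"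
    unfolding hamming_dist_def M_def by (simp add: card_Diff_subset subset_eq)
  then show ?thesis using cM by simp
qed

lemma upper_bound:
  fixes x :: "nat \<Rightarrow> 'a::{field,finite}"
  assumes card: "card (UNIV :: 'a set) = q ^ m"
  shows "\<exists>f \<in> (F_code q n :: (nat \<Rightarrow> 'a) set). hamming_dist n x f \<le> n - card fullR"
proof -
  let ?Cl = "cyclotomic_class q n"
  define rep where "rep i = Min (?Cl i)" for i
  define jj where "jj i = (LEAST j. q ^ j * rep i mod n = i)" for i
  define f where "f i = (if i < n then (if per q n i = m then x (rep i) ^ (q ^ jj i) else 0) else undefined)" for i
  have rep: "rep i \<in> ?Cl i" "rep i < n" "?Cl (rep i) = ?Cl i" "per q n (rep i) = per q n i"
    if "i < n" for i
  proof -
    show r: "rep i \<in> ?Cl i" unfolding rep_def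
      using finite_class[OF qm npos mpos that] self_in_class[OF qm npos mpos that] by (intro Min_in) auto
    show "rep i < n" using class_lt[OF qm npos mpos r] .
    show "?Cl (rep i) = ?Cl i" using class_mem[OF qm npos mpos that r] .
    show "per q n (rep i) = per q n i" using per_mem[OF qm npos mpos that r] .
  qed
  have jj: "q ^ jj i * rep i mod n = i" if "i < n" for i
  proof -
    have "i \<in> ?Cl (rep i)" using rep(3)[OF that] self_in_class[OF qm npos mpos that] by simp
    then obtain j where "i = q ^ j * rep i mod n" unfolding cyclotomic_class_def by auto
    then show ?thesis unfolding jj_def by (metis (mono_tags, lifting) LeastI)
  qed
  have fF: "f \<in> F_code q n"
    unfolding F_code_def words_def
  proof (intro CollectI conjI allI impI)
    show "f \<in> {..<n} \<rightarrow>\<^sub>E UNIV" unfolding f_def by (auto simp: PiE_iff extensional_def)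
    fix i assume i: "i < n"
    define i' where "i' = q * i mod n"
    have i'n: "i' < n" using npos i'_def by simp
    have "i' \<in> ?Cl i" unfolding i'_def cyclotomic_class_def by (rule CollectI, rule exI[of _ 1]) simp
    then have Cl': "?Cl i' = ?Cl i" using class_mem[OF qm npos mpos i] by simp
    have pe: "per q n i' = per q n i" using per_mem[OF qm npos mpos i \<open>i' \<in> ?Cl i\<close>] .
    have re: "rep i' = rep i" unfolding rep_def Cl' ..
    show "f (q * i mod n) = f i ^ q"
    proof (cases "per q n i = m")
      case False
      then show ?thesis using i i'n pe unfolding f_def i'_def[symmetric]
        using qpos by simp
    next
      case True
      let ?s = "rep i"
      have s: "?s < n" "per q n ?s = m" using rep[OF i] True by auto
      have "q ^ jj i' * ?s mod n = q ^ (jj i + 1) * ?s mod n"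
      proof -
        have "q ^ jj i' * ?s mod n = i'" using jj[OF i'n] re by simp
        also have "\<dots> = q ^ 1 * (q ^ jj i * ?s mod n) mod n" using jj[OF i] i'_def by simp
        also have "\<dots> = q ^ (jj i + 1) * ?s mod n" by (simp only: mod_shift add.commute)
        finally show ?thesis .
      qed
      then have "q ^ (jj i' mod m) * ?s mod n = q ^ ((jj i + 1) mod m) * ?s mod n"
        using per_mod[OF qm npos mpos s(1)] s(2) by metis
      then have jm: "jj i' mod m = (jj i + 1) mod m"
        using per_inj[OF qm npos mpos s(1)] s(2) mpos by simp
      have "f i' = x ?s ^ (q ^ jj i')" unfolding f_def using i'n pe True re by simp
      also have "\<dots> = x ?s ^ (q ^ (jj i + 1))"
        using frob_mod[OF card, of "x ?s" "jj i'"] frob_mod[OF card, of "x ?s" "jj i + 1"] jm by simp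
      also have "\<dots> = (x ?s ^ (q ^ jj i)) ^ q" by (simp add: power_mult[symmetric] mult.commute)
      also have "\<dots> = f i ^ q" unfolding f_def using i True by simp
      finally show ?thesis unfolding i'_def .
    qed
  qed
  have Minj: "inj_on Min fullR"
  proof
    fix C1 C2 assume C1: "C1 \<in> fullR" and C2: "C2 \<in> fullR" and eq: "Min C1 = Min C2"
    obtain i1 where i1: "i1 < n" "C1 = ?Cl i1" using C1 unfolding fullR_def by auto
    obtain i2 where i2: "i2 < n" "C2 = ?Cl i2" using C2 unfolding fullR_def by auto
    have "?Cl (Min C1) = C1" using rep(3)[OF i1(1)] i1(2) unfolding rep_def by simp
    moreover have "?Cl (Min C2) = C2" using rep(3)[OF i2(1)] i2(2) unfolding rep_def by simp
    ultimately show "C1 = C2" using eq by metis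
  qed
  have match: "Min ` fullR \<subseteq> {i. i < n \<and> x i = f i}"
  proof
    fix s assume "s \<in> Min ` fullR"
    then obtain C where C: "C \<in> fullR" "s = Min C" by auto
    obtain i where i: "i < n" "C = ?Cl i" "per q n i = m"
      using C card_class[OF qm npos mpos] unfolding fullR_def by auto
    have s: "s = rep i" using C i rep_def by simp
    have sn: "s < n" using rep(2)[OF i(1)] s by simp
    have ps: "per q n s = m" using rep(4)[OF i(1)] s i by simp
    have rs: "rep s = s" using rep(3)[OF i(1)] s unfolding rep_def by simp
    have "jj s = 0" unfolding jj_def rs using sn by (intro Least_eq_0) simp
    then have "f s = x s" unfolding f_def using sn ps rs by simp
    then show "s \<in> {i. i < n \<and> x i = f i}" using sn by simp
  qed
  have "{i. i < n \<and> x i \<noteq> f i} \<subseteq> {..<n} - Min ` fullR" using match by auto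
  then have "hamming_dist n x f \<le> card ({..<n} - Min ` fullR)"
    unfolding hamming_dist_def by (intro card_mono) auto
  also have "\<dots> = n - card (Min ` fullR)"
    using match by (subst card_Diff_subset) (auto intro: finite_subset[OF _ finite_fullR])
  also have "card (Min ` fullR) = card fullR" using card_image[OF Minj] .
  finally show ?thesis using fF by blast
qed

end


lemma mu_one: "moebius_mu 1 = 1"
  by (simp add: moebius_mu_def)

lemma mu_p_dvd:
  assumes p: "prime (p::nat)" and d: "p dvd d"
  shows "moebius_mu (p * d) = 0"
proof -
  have "p ^ 2 dvd p * d" using d by (simp add: power2_eq_square)
  moreover have "\<not> is_unit p" using p by auto
  ultimately have "\<not> squarefree (p * d)" unfolding squarefree_def by blast
  then show ?thesis by (simp add: moebius_mu_def)
qed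

lemma mu_p_ndvd:
  assumes p: "prime (p::nat)" and d: "\<not> p dvd d" and dpos: "d > 0"
  shows "moebius_mu (p * d) = - moebius_mu d"
proof -
  have cop: "coprime p d" using prime_imp_coprime[OF p d] .
  have sq: "squarefree (p * d) \<longleftrightarrow> squarefree d"
    using squarefree_multD(2)[of p d] squarefree_mult_coprime[OF cop squarefree_prime[OF p]] by blast
  have pf: "prime_factors (p * d) = insert p (prime_factors d)"
    using prime_factors_product[of p d] p dpos prime_prime_factors[OF p] by auto
  have pn: "p \<notin> prime_factors d" using d by (auto dest: in_prime_factors_imp_dvd)
  have "card (prime_factors (p * d)) = Suc (card (prime_factors d))"
    unfolding pf using pn by simp
  then show ?thesis using sq p dpos by (simp add: moebius_mu_def)
qed

lemma mu_sum:
  assumes k: "(k::nat) > 0"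
  shows "(\<Sum>d | d dvd k. moebius_mu d) = (if k = 1 then 1 else 0)"
proof (cases "k = 1")
  case True
  then have "{d. d dvd k} = {1}" by auto
  then show ?thesis using True mu_one by simp
next
  case False
  obtain p where p: "prime p" "p dvd k" using prime_factor_nat[OF False] by auto
  obtain k' where k': "k = p * k'" using p(2) by auto
  have k'pos: "k' > 0" using k k' by auto
  define D where "D = {d. d dvd k}"
  have finD: "finite D" unfolding D_def using k by simp
  define E where "E = {d. d dvd k' \<and> \<not> p dvd d}"
  have DE: "D - {d. p dvd d} = E"
  proof (rule set_eqI)
    fix d
    show "d \<in> D - {d. p dvd d} \<longleftrightarrow> d \<in> E"
    proof
      assume "d \<in> D - {d. p dvd d}"
      then have d: "d dvd p * k'" "\<not> p dvd d" unfolding D_def k' by auto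
      have "coprime d p" using prime_imp_coprime[OF p(1) d(2)] by (simp add: coprime_commute)
      then have "d dvd k'" using d(1) coprime_dvd_mult_right_iff by blast
      then show "d \<in> E" using d unfolding E_def by auto
    qed (auto simp: D_def E_def k')
  qed
  have DP: "D \<inter> {d. p dvd d} = (\<lambda>d'. p * d') ` {d'. d' dvd k'}"
  proof (rule set_eqI, rule iffI)
    fix x assume "x \<in> D \<inter> {d. p dvd d}"
    then have x: "x dvd p * k'" "p dvd x" unfolding D_def k' by auto
    obtain y where y: "x = p * y" using x(2) by (elim dvdE)
    have "y dvd k'" using x(1) y p(1) nat_mult_dvd_cancel1[of p y k'] prime_gt_0_nat by auto
    then show "x \<in> (\<lambda>d'. p * d') ` {d'. d' dvd k'}" using y by auto
  qed (auto simp: D_def k' mult_dvd_mono)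
  have injp: "inj_on (\<lambda>d'. p * d') {d'. d' dvd k'}"
    using p(1) by (auto simp: inj_on_def prime_gt_0_nat)
  have "(\<Sum>d\<in>D \<inter> {d. p dvd d}. moebius_mu d) = (\<Sum>d'| d' dvd k'. moebius_mu (p * d'))"
    unfolding DP by (subst sum.reindex[OF injp]) simp
  also have "\<dots> = (\<Sum>d'| d' dvd k'. if \<not> p dvd d' then - moebius_mu d' else 0)"
  proof (rule sum.cong)
    fix d' assume "d' \<in> {d'. d' dvd k'}"
    then have "d' > 0" using k'pos by (auto intro: Nat.gr0I)
    then show "moebius_mu (p * d') = (if \<not> p dvd d' then - moebius_mu d' else 0)"
      using mu_p_dvd[OF p(1)] mu_p_ndvd[OF p(1)] by auto
  qed simp
  also have "\<dots> = (\<Sum>d\<in>E. - moebius_mu d)"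
    unfolding E_def by (subst sum.inter_filter[symmetric]) (auto simp: k'pos)
  finally have "(\<Sum>d\<in>D \<inter> {d. p dvd d}. moebius_mu d) = - (\<Sum>d\<in>E. moebius_mu d)"
    by (simp add: sum_negf)
  moreover have "(\<Sum>d\<in>D. moebius_mu d) = (\<Sum>d\<in>D \<inter> {d. p dvd d}. moebius_mu d) + (\<Sum>d\<in>D - {d. p dvd d}. moebius_mu d)"
    using sum.Int_Diff[OF finD] .
  ultimately show ?thesis using DE False unfolding D_def by simp
qed

lemma mobius_inv:
  fixes H G :: "nat \<Rightarrow> int"
  assumes m: "m > 0" and HG: "\<And>d. d dvd m \<Longrightarrow> (\<Sum>e | e dvd d. H e) = G d"
  shows "H m = (\<Sum>r | r dvd m. moebius_mu (m div r) * G r)"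
proof -
  define Dv where "Dv n = {d::nat. d dvd n}" for n
  have finDv: "finite (Dv m)" unfolding Dv_def using m by simp
  have inner: "(\<Sum>r\<in>{r \<in> Dv m. e dvd r}. moebius_mu (m div r)) = (if e = m then 1 else 0)"
    if e: "e \<in> Dv m" for e
  proof -
    obtain c where c: "m = e * c" using e unfolding Dv_def by auto
    have epos: "e > 0" "c > 0" using c m by auto
    have "(\<Sum>r\<in>{r \<in> Dv m. e dvd r}. moebius_mu (m div r)) = (\<Sum>u\<in>Dv c. moebius_mu u)"
    proof (rule sum.reindex_bij_witness[of _ "\<lambda>u. m div u" "\<lambda>r. m div r"])
      fix r assume "r \<in> {r \<in> Dv m. e dvd r}"
      then have rr: "r dvd m" "e dvd r" unfolding Dv_def by auto
      obtain s where r1: "m = r * s" using rr(1) by (elim dvdE)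
      obtain b where r2: "r = e * b" using rr(2) by (elim dvdE)
      note r = r1 r2
      have rp: "r > 0" "s > 0" using r m by auto
      show "m div (m div r) = r" using r rp by simp
      have "c = b * s" using r c epos by (metis mult.assoc nonzero_mult_div_cancel_left not_gr0)
      then show "m div r \<in> Dv c" unfolding Dv_def using r rp by simp
      show "moebius_mu (m div r) = moebius_mu (m div r)" ..
    next
      fix u assume "u \<in> Dv c"
      then obtain t where t: "c = u * t" unfolding Dv_def by auto
      have up: "u > 0" "t > 0" using t epos by auto
      have mu: "m = (e * t) * u" using c t by simp
      show "m div (m div u) = u" using mu up epos by simp
      show "m div u \<in> {r \<in> Dv m. e dvd r}" unfolding Dv_def using mu up by simp
    qed
    also have "\<dots> = (if c = 1 then 1 else 0)" unfolding Dv_def using mu_sum epos by simp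
    also have "(c = 1) = (e = m)" using c epos by auto
    finally show ?thesis .
  qed
  have "(\<Sum>r | r dvd m. moebius_mu (m div r) * G r)
      = (\<Sum>r\<in>Dv m. \<Sum>e\<in>{e \<in> Dv m. e dvd r}. moebius_mu (m div r) * H e)"
  proof (rule sum.cong)
    fix r assume r0: "r \<in> Dv m"
    then have r: "r dvd m" unfolding Dv_def by simp
    have "{e \<in> Dv m. e dvd r} = {e. e dvd r}" using r unfolding Dv_def by (auto intro: dvd_trans)
    have "moebius_mu (m div r) * G r = moebius_mu (m div r) * (\<Sum>e\<in>{e \<in> Dv m. e dvd r}. H e)"
      using HG[of r] r \<open>{e \<in> Dv m. e dvd r} = {e. e dvd r}\<close> by simp
    then show "moebius_mu (m div r) * G r = (\<Sum>e\<in>{e \<in> Dv m. e dvd r}. moebius_mu (m div r) * H e)"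
      by (simp only: sum_distrib_left)
  qed (simp add: Dv_def)
  also have "\<dots> = (\<Sum>e\<in>Dv m. \<Sum>r\<in>{r \<in> Dv m. e dvd r}. moebius_mu (m div r) * H e)"
    by (rule sum.swap_restrict[OF finDv finDv])
  also have "\<dots> = (\<Sum>e\<in>Dv m. H e * (if e = m then 1 else 0))"
  proof (rule sum.cong[OF refl])
    fix e assume e: "e \<in> Dv m"
    have "(\<Sum>r\<in>{r \<in> Dv m. e dvd r}. moebius_mu (m div r) * H e)
        = (\<Sum>r\<in>{r \<in> Dv m. e dvd r}. moebius_mu (m div r)) * H e"
      by (simp only: sum_distrib_right)
    also have "\<dots> = H e * (if e = m then 1 else 0)" using inner[OF e] by simp
    finally show "(\<Sum>r\<in>{r \<in> Dv m. e dvd r}. moebius_mu (m div r) * H e) = H e * (if e = m then 1 else 0)" .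
  qed
  also have "\<dots> = (\<Sum>e\<in>Dv m. if e = m then H e else 0)" by (rule sum.cong) auto
  also have "\<dots> = H m" using finDv by (subst sum.delta) (auto simp: Dv_def)
  finally show ?thesis by simp
qed



lemma count_dvd:
  fixes q m n d :: nat
  assumes q2: "q \<ge> 2" and mpos: "m > 0" and nq: "n = q ^ m - 1" and d: "d dvd m"
    and qm: "q ^ m mod n = 1 mod n" and npos: "n > 0"
  shows "card {i. i < n \<and> per q n i dvd d} = q ^ d - 1"
proof -
  have dpos: "d > 0" using d mpos by (auto intro: Nat.gr0I)
  define a where "a = q ^ d"
  have a2: "a \<ge> 2" unfolding a_def using q2 dpos
    using power_increasing[of 1 d q] by simp
  obtain k where mk: "m = d * k" using d by auto
  have "int a - 1 dvd (int a) ^ k - 1" using power_diff_1_eq[of "int a" k] by simp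
  then have "int (a - 1) dvd int (a ^ k - 1)" using a2
    by (simp add: of_nat_diff)
  then have "(a - 1) dvd n" unfolding nq mk a_def by (simp add: power_mult)
  then obtain t where nt: "n = (a - 1) * t" by auto
  have tpos: "t > 0" using nt npos by (auto intro: Nat.gr0I)
  have a1: "a - 1 > 0" using a2 by simp
  have S: "{i. i < n \<and> per q n i dvd d} = (\<lambda>j. t * j) ` {..<a - 1}"
  proof (rule set_eqI)
    fix i
    show "i \<in> {i. i < n \<and> per q n i dvd d} \<longleftrightarrow> i \<in> (\<lambda>j. t * j) ` {..<a - 1}"
    proof (cases "i < n")
      case True
      have "per q n i dvd d \<longleftrightarrow> q ^ d * i mod n = i"
        using per_dvd_iff[OF qm npos mpos True] by simp
      also have "\<dots> \<longleftrightarrow> a * i mod n = i mod n" using True a_def by simp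
      also have "\<dots> \<longleftrightarrow> n dvd a * i - i"
        using a2 by (intro mod_eq_dvd_iff_nat) simp
      also have "a * i - i = (a - 1) * i" by (simp add: diff_mult_distrib)
      also have "n dvd (a - 1) * i \<longleftrightarrow> t dvd i" unfolding nt using nat_mult_dvd_cancel1[OF a1] .
      also have "\<dots> \<longleftrightarrow> i \<in> (\<lambda>j. t * j) ` {..<a - 1}"
      proof
        assume "t dvd i"
        then obtain j where j: "i = t * j" by auto
        have "j < a - 1" using True j nt tpos by (simp add: mult.commute)
        then show "i \<in> (\<lambda>j. t * j) ` {..<a - 1}" using j by auto
      qed auto
      finally show ?thesis using True by simp
    next
      case False
      have "t * j < n" if "j < a - 1" for j
        using that tpos nt by (simp add: mult.commute)
      then show ?thesis using False by auto
    qed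
  qed
  have "inj_on (\<lambda>j. t * j) {..<a - 1}" using tpos by (auto simp: inj_on_def)
  then show ?thesis unfolding S a_def by (simp add: card_image)
qed

lemma count_full:
  fixes q m n :: nat
  assumes qm: "q ^ m mod n = 1 mod n" and npos: "n > 0" and mpos: "m > 0" and qpos: "q > 0"
  shows "card {i. i < n \<and> per q n i = m} = m * B_count q m n"
proof -
  let ?Cl = "cyclotomic_class q n"
  let ?R = "{C \<in> ?Cl ` {..<n}. card C = m}"
  have U: "\<Union>?R = {i. i < n \<and> per q n i = m}"
  proof (rule set_eqI, rule iffI)
    fix x assume "x \<in> \<Union>?R"
    then obtain i where i: "i < n" "x \<in> ?Cl i" "card (?Cl i) = m" by auto
    then show "x \<in> {i. i < n \<and> per q n i = m}"
      using class_lt[OF qm npos mpos] per_mem[OF qm npos mpos] card_class[OF qm npos mpos] by auto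
  next
    fix x assume "x \<in> {i. i < n \<and> per q n i = m}"
    then show "x \<in> \<Union>?R"
      using self_in_class[OF qm npos mpos] card_class[OF qm npos mpos] by auto
  qed
  have disj: "\<forall>c1\<in>?R. \<forall>c2\<in>?R. c1 \<noteq> c2 \<longrightarrow> c1 \<inter> c2 = {}"
    proof (intro ballI impI)
      fix c1 c2 assume c1: "c1 \<in> ?R" and c2: "c2 \<in> ?R" and ne: "c1 \<noteq> c2"
      show "c1 \<inter> c2 = {}"
      proof (rule ccontr)
        assume "c1 \<inter> c2 \<noteq> {}"
        then obtain x where x: "x \<in> c1" "x \<in> c2" by auto
        obtain i1 where i1: "i1 < n" "c1 = ?Cl i1" using c1 by auto
        obtain i2 where i2: "i2 < n" "c2 = ?Cl i2" using c2 by auto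
        have "?Cl x = c1" using class_mem[OF qm npos mpos i1(1)] x i1 by simp
        moreover have "?Cl x = c2" using class_mem[OF qm npos mpos i2(1)] x i2 by simp
        ultimately show False using ne by simp
      qed
    qed
  have "m * card ?R = card (\<Union>?R)"
    by (rule card_partition) (use disj in \<open>auto simp: U\<close>)
  then show ?thesis unfolding U B_count_def by simp
qed



theorem theorem10p3:
  fixes q m n :: nat
  assumes q_pp: "\<exists>p k. prime p \<and> k > 0 \<and> q = p ^ k"
    and m_pos: "m > 0"
    and card_L: "card (UNIV :: 'a::{field,finite} set) = q ^ m"
    and n_dvd: "n dvd q ^ m - 1"
  shows "covering_radius n (F_code q n :: (nat \<Rightarrow> 'a) set) = n - B_count q m n
         \<and> (n = q ^ m - 1 \<longrightarrow>
              real (B_count q m n) =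
                (1 / real m) * (\<Sum>r | r dvd m. real_of_int (moebius_mu (m div r)) * (real q ^ r - 1)))"
proof
  obtain p k where pk: "prime p" "k > 0" "q = p ^ k" using q_pp by auto
  have q2: "q \<ge> 2"
  proof -
    have "p \<ge> 2" using pk(1) prime_ge_2_nat by blast
    moreover have "p ^ 1 \<le> p ^ k" using pk(2) \<open>p \<ge> 2\<close> by (intro power_increasing) auto
    ultimately show ?thesis using pk(3) by simp
  qed
  have qpos: "q > 0" using q2 by simp
  have qm2: "q ^ m \<ge> 2" using q2 m_pos power_increasing[of 1 m q] by simp
  have npos: "n > 0" using n_dvd qm2 by (auto intro: Nat.gr0I)
  have qm: "q ^ m mod n = 1 mod n" using n_dvd qm2 by (subst mod_eq_dvd_iff_nat) auto
  note ctx = qm npos m_pos qpos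
  let ?F = "F_code q n :: (nat \<Rightarrow> 'a) set"
  let ?B = "B_count q m n"
  have Beq: "?B = card (fullR q m n)" by (rule B_eq[OF ctx])
  show "covering_radius n ?F = n - ?B"
  proof -
    obtain z :: 'a where z: "\<forall>e. 0 < e \<and> e < m \<longrightarrow> z ^ (q ^ e) \<noteq> z"
      using exists_gen[OF card_L q2] by auto
    have finW: "finite (words n :: (nat \<Rightarrow> 'a) set)" unfolding words_def by (simp add: finite_PiE)
    have finF: "finite ?F" using finW unfolding F_code_def by simp
    define D where "D x = Min ((\<lambda>c. hamming_dist n x c) ` ?F)" for x :: "nat \<Rightarrow> 'a"
    have up: "D x \<le> n - ?B" for x
    proof -
      obtain f where f: "f \<in> ?F" "hamming_dist n x f \<le> n - ?B"
        using upper_bound[OF ctx card_L, of x] Beq by auto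
      have "D x \<le> hamming_dist n x f" unfolding D_def using finF f(1) by (intro Min_le) auto
      then show ?thesis using f(2) by simp
    qed
    define x0 where "x0 = (\<lambda>i. if i < n then z else undefined)"
    have x0W: "x0 \<in> words n" unfolding x0_def words_def by (auto simp: PiE_iff extensional_def)
    have Fne: "?F \<noteq> {}" using upper_bound[OF ctx card_L, of x0] by auto
    have low: "n - ?B \<le> D x0"
      unfolding D_def using finF Fne lower_bound[OF ctx card_L z] Beq unfolding x0_def
      by (subst Min_ge_iff) auto
    have "Max (D ` words n) = n - ?B"
    proof (rule antisym)
      show "Max (D ` words n) \<le> n - ?B" using finW x0W up by (subst Max_le_iff) auto
      show "n - ?B \<le> Max (D ` words n)" using finW x0W low by (subst Max_ge_iff) auto
    qed
    then show ?thesis unfolding covering_radius_def D_def by simp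
  qed
  show "n = q ^ m - 1 \<longrightarrow> real ?B =
          (1 / real m) * (\<Sum>r | r dvd m. real_of_int (moebius_mu (m div r)) * (real q ^ r - 1))"
  proof
    assume nq: "n = q ^ m - 1"
    define H where "H e = int (card {i. i < n \<and> per q n i = e})" for e
    define G where "G d = int q ^ d - 1" for d
    have HG: "(\<Sum>e | e dvd d. H e) = G d" if d: "d dvd m" for d
    proof -
      have dpos: "d > 0" using d m_pos by (auto intro: Nat.gr0I)
      have U: "{i. i < n \<and> per q n i dvd d} = (\<Union>e\<in>{e. e dvd d}. {i. i < n \<and> per q n i = e})"
        by auto
      have "card {i. i < n \<and> per q n i dvd d} = (\<Sum>e | e dvd d. card {i. i < n \<and> per q n i = e})"
        unfolding U using dpos by (intro card_UN_disjoint) auto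
      then have "(\<Sum>e | e dvd d. H e) = int (card {i. i < n \<and> per q n i dvd d})"
        unfolding H_def by simp
      also have "\<dots> = int (q ^ d - 1)" using count_dvd[OF q2 m_pos nq d qm npos] by simp
      also have "\<dots> = G d" unfolding G_def using qpos by (simp add: of_nat_diff)
      finally show ?thesis .
    qed
    have "H m = (\<Sum>r | r dvd m. moebius_mu (m div r) * G r)"
      by (rule mobius_inv[OF m_pos HG])
    then have "int (m * ?B) = (\<Sum>r | r dvd m. moebius_mu (m div r) * (int q ^ r - 1))"
      unfolding H_def G_def using count_full[OF ctx] by simp
    then have "real_of_int (int (m * ?B)) = real_of_int (\<Sum>r | r dvd m. moebius_mu (m div r) * (int q ^ r - 1))"
      by simp
    then have "real m * real ?B = (\<Sum>r | r dvd m. real_of_int (moebius_mu (m div r)) * (real q ^ r - 1))"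
      by simp
    then show "real ?B = (1 / real m) * (\<Sum>r | r dvd m. real_of_int (moebius_mu (m div r)) * (real q ^ r - 1))"
      using m_pos by (simp add: field_simps)
  qed
qed


end
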